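(* Let $\Omega=[0,\sigma_I^{max}]$ with $\sigma_I^{max}>0$, let $g:[0,\infty)\to[0,\infty)$ be strictly increasing on $\Omega$ with $g(0)=0$, continuously differentiable on $\Omega$ with $g'(0)=0$. For constants $D_0\ge 0$, $D_1>0$ let $h(x)=g(D_0+D_1x)$. (1) Suppose $D_0+D_1x\in\Omega$ and $h(x)\in\Omega$ for all $x\in\Omega$. If there exists $\gamma<1$ such that $D_1\le\frac{\gamma}{\max_{x\in\Omega}g'(x)}$, then $h$ has exactly one fixed point $x_f$ in $\Omega$, and for every $x_0\in\Omega$ the iteration $x_{k+1}=h(x_k)$ satisfies $|x_k-x_f|\le\frac{\gamma^k}{1-\gamma}|x_0-x_f|$ for all $k\ge0$. (2) If there exists $x_1\in\Omega$ such that $\frac{1}{g'(x_1)}<D_1<\frac{x_1}{g(x_1)}$, then there exists $D_0\ge0$ such that $h(x)=g(D_0+D_1x)$ has more than one fixed point.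
   Context: Here $g$ models the channel decoder's output error probability as a function of the inverse input SINR, and $h$ is the iterative mapping of the decoder error probability across iterations; a fixed point of $h$ is an $x\ge0$ with $h(x)=x$. *)

theory Defs
  imports "HOL-Analysis.Analysis"
begin

definition hmap :: "(real \<Rightarrow> real) \<Rightarrow> real \<Rightarrow> real \<Rightarrow> real \<Rightarrow> real" where
  "hmap g D0 D1 x = g (D0 + D1 * x)"

end

theory Submission
  imports Defs
begin

lemma mvt_bound:
  fixes g g' :: "real \<Rightarrow> real" and \<sigma> a b :: real
  assumes g_deriv: "\<forall>x\<in>{0..\<sigma>}. (g has_real_derivative g' x) (at x within {0..\<sigma>})"
    and bdd: "bdd_above (g' ` {0..\<sigma>})"
    and ab: "0 \<le> a" "a < b" "b \<le> \<sigma>"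
  shows "\<exists>c\<in>{a<..<b}. g b - g a = g' c * (b - a) \<and> g' c \<le> (SUP x\<in>{0..\<sigma>}. g' x)"
proof -
  have "\<exists>c\<in>{a<..<b}. g b - g a = (*) (g' c) (b - a)"
  proof (rule mvt_simple)
    show "a < b" by fact
    fix x assume "a \<le> x" "x \<le> b"
    then have "(g has_real_derivative g' x) (at x within {0..\<sigma>})" using g_deriv ab by auto
    then have "(g has_real_derivative g' x) (at x within {a..b})"
      by (rule has_field_derivative_subset) (use ab in auto)
    then show "(g has_derivative (*) (g' x)) (at x within {a..b})"
      by (simp add: has_field_derivative_def)
  qed
  then obtain c where c: "c\<in>{a<..<b}" "g b - g a = g' c * (b - a)" by auto
  have "g' c \<le> (SUP x\<in>{0..\<sigma>}. g' x)"
    by (rule cSUP_upper) (use c ab bdd in auto)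
  with c show ?thesis by auto
qed

theorem propositionV1:
  fixes g g' :: "real \<Rightarrow> real" and \<sigma> D1 :: real
  assumes sigma_pos: "\<sigma> > 0"
    and g_nonneg: "\<forall>x\<ge>0. g x \<ge> 0"
    and g_mono: "strict_mono_on {0..\<sigma>} g"
    and g0: "g 0 = 0"
    and g_deriv: "\<forall>x\<in>{0..\<sigma>}. (g has_real_derivative g' x) (at x within {0..\<sigma>})"
    and g'_cont: "continuous_on {0..\<sigma>} g'"
    and g'0: "g' 0 = 0"
    and D1_pos: "D1 > 0"
  shows
    "(\<forall>D0 \<gamma>. D0 \<ge> 0
        \<longrightarrow> (\<forall>x\<in>{0..\<sigma>}. D0 + D1 * x \<in> {0..\<sigma>} \<and> hmap g D0 D1 x \<in> {0..\<sigma>})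
        \<longrightarrow> \<gamma> < 1
        \<longrightarrow> D1 \<le> \<gamma> / (SUP x\<in>{0..\<sigma>}. g' x)
        \<longrightarrow> (\<exists>!xf. xf \<in> {0..\<sigma>} \<and> hmap g D0 D1 xf = xf)
          \<and> (\<forall>xf\<in>{0..\<sigma>}. hmap g D0 D1 xf = xf \<longrightarrow>
               (\<forall>x0\<in>{0..\<sigma>}. \<forall>k::nat.
                  \<bar>(hmap g D0 D1 ^^ k) x0 - xf\<bar> \<le> \<gamma> ^ k / (1 - \<gamma>) * \<bar>x0 - xf\<bar>)))
     \<and> ((\<exists>x1\<in>{0..\<sigma>}. g' x1 > 0 \<and> 1 / g' x1 < D1 \<and> D1 < x1 / g x1)
        \<longrightarrow> (\<exists>D0\<ge>0. \<exists>x y. x \<ge> 0 \<and> y \<ge> 0 \<and> x \<noteq> y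
                \<and> hmap g D0 D1 x = x \<and> hmap g D0 D1 y = y))"
proof
  define M where "M = (SUP x\<in>{0..\<sigma>}. g' x)"
  have bdd: "bdd_above (g' ` {0..\<sigma>})"
    using compact_continuous_image[OF g'_cont compact_Icc]
    by (intro bounded_imp_bdd_above compact_imp_bounded)
  have gcont: "continuous_on {0..\<sigma>} g"
    using g_deriv by (meson DERIV_continuous continuous_at_imp_continuous_on
       continuous_on_eq_continuous_within)
  have lip: "0 \<le> g b - g a \<and> g b - g a \<le> M * (b - a)" if "0 \<le> a" "a \<le> b" "b \<le> \<sigma>" for a b
  proof (cases "a = b")
    case True then show ?thesis by simp
  next
    case False
    then have "a < b" using that by simp
    from mvt_bound[OF g_deriv bdd that(1) this that(3)] obtain c where
      c: "g b - g a = g' c * (b - a)" "g' c \<le> M" unfolding M_def by auto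
    have "g a < g b" using g_mono \<open>a < b\<close> that unfolding strict_mono_on_def by auto
    moreover have "g' c * (b - a) \<le> M * (b - a)" using c \<open>a < b\<close> by (intro mult_right_mono) auto
    ultimately show ?thesis using c by auto
  qed
  have Mpos: "M > 0"
  proof -
    have "g 0 < g \<sigma>" using g_mono sigma_pos unfolding strict_mono_on_def by auto
    with lip[of 0 \<sigma>] sigma_pos have "0 < M * \<sigma>" by auto
    with sigma_pos show ?thesis by (simp add: zero_less_mult_iff)
  qed
  show "\<forall>D0 \<gamma>. D0 \<ge> 0
        \<longrightarrow> (\<forall>x\<in>{0..\<sigma>}. D0 + D1 * x \<in> {0..\<sigma>} \<and> hmap g D0 D1 x \<in> {0..\<sigma>})
        \<longrightarrow> \<gamma> < 1
        \<longrightarrow> D1 \<le> \<gamma> / (SUP x\<in>{0..\<sigma>}. g' x)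
        \<longrightarrow> (\<exists>!xf. xf \<in> {0..\<sigma>} \<and> hmap g D0 D1 xf = xf)
          \<and> (\<forall>xf\<in>{0..\<sigma>}. hmap g D0 D1 xf = xf \<longrightarrow>
               (\<forall>x0\<in>{0..\<sigma>}. \<forall>k::nat.
                  \<bar>(hmap g D0 D1 ^^ k) x0 - xf\<bar> \<le> \<gamma> ^ k / (1 - \<gamma>) * \<bar>x0 - xf\<bar>))"
  proof (intro allI impI)
    fix D0 \<gamma> :: real
    assume D0: "D0 \<ge> 0"
      and inv: "\<forall>x\<in>{0..\<sigma>}. D0 + D1 * x \<in> {0..\<sigma>} \<and> hmap g D0 D1 x \<in> {0..\<sigma>}"
      and g1: "\<gamma> < 1" and D1le: "D1 \<le> \<gamma> / (SUP x\<in>{0..\<sigma>}. g' x)"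
    define h where "h = hmap g D0 D1"
    have DM: "D1 * M \<le> \<gamma>" using D1le Mpos unfolding M_def[symmetric] by (simp add: field_simps)
    have gpos: "\<gamma> > 0" using DM D1_pos Mpos by (smt (verit) mult_pos_pos)
    have hcon: "\<bar>h x - h y\<bar> \<le> \<gamma> * \<bar>x - y\<bar>" if "x \<in> {0..\<sigma>}" "y \<in> {0..\<sigma>}" for x y
    proof -
      have wlog: "\<bar>h a - h b\<bar> \<le> \<gamma> * \<bar>a - b\<bar>" if "a \<in> {0..\<sigma>}" "b \<in> {0..\<sigma>}" "a \<le> b" for a b
      proof -
        have ia: "D0 + D1 * a \<in> {0..\<sigma>}" and ib: "D0 + D1 * b \<in> {0..\<sigma>}" using inv that by auto
        have le: "D0 + D1 * a \<le> D0 + D1 * b" using that D1_pos by simp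
        from lip[OF _ le] ia ib have
          "0 \<le> h b - h a" "h b - h a \<le> M * (D1 * b - D1 * a)"
          unfolding h_def hmap_def by (auto simp: algebra_simps)
        moreover have "M * (D1 * b - D1 * a) = (D1 * M) * (b - a)" by (simp add: algebra_simps)
        moreover have "(D1 * M) * (b - a) \<le> \<gamma> * (b - a)" using DM that by (intro mult_right_mono) auto
        ultimately show ?thesis using that by (auto simp: abs_if)
      qed
      show ?thesis
      proof (cases "x \<le> y")
        case True then show ?thesis using wlog that by auto
      next
        case False then show ?thesis using wlog[of y x] that by (auto simp: abs_minus_commute)
      qed
    qed
    have hin: "h x \<in> {0..\<sigma>}" if "x \<in> {0..\<sigma>}" for x using inv that h_def by auto
    have hcont: "continuous_on {0..\<sigma>} h"
    proof -
      have "continuous_on {0..\<sigma>} (g \<circ> (\<lambda>x. D0 + D1 * x))"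
      proof (rule continuous_on_compose)
        show "continuous_on {0..\<sigma>} (\<lambda>x. D0 + D1 * x)" by (intro continuous_intros)
        have "(\<lambda>x. D0 + D1 * x) ` {0..\<sigma>} \<subseteq> {0..\<sigma>}" using inv by blast
        then show "continuous_on ((\<lambda>x. D0 + D1 * x) ` {0..\<sigma>}) g" by (rule continuous_on_subset[OF gcont])
      qed
      then show ?thesis unfolding h_def hmap_def[abs_def] by (simp add: o_def)
    qed
    have ex: "\<exists>xf. xf \<in> {0..\<sigma>} \<and> h xf = xf"
    proof -
      have c: "continuous_on {0..\<sigma>} (\<lambda>x. h x - x)" by (intro continuous_intros hcont)
      have "h 0 - 0 \<ge> 0" "h \<sigma> - \<sigma> \<le> 0" using hin[of 0] hin[of \<sigma>] sigma_pos by auto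
      from IVT2'[of "\<lambda>x. h x - x", OF this(2) this(1)] c sigma_pos
      show ?thesis by force
    qed
    have uniq: "x = y" if "x \<in> {0..\<sigma>}" "y \<in> {0..\<sigma>}" "h x = x" "h y = y" for x y
    proof -
      have "\<bar>x - y\<bar> \<le> \<gamma> * \<bar>x - y\<bar>" using hcon[OF that(1,2)] that by simp
      then have "(1 - \<gamma>) * \<bar>x - y\<bar> \<le> 0" by (simp add: algebra_simps)
      then show ?thesis using g1 by (simp add: mult_le_0_iff)
    qed
    have iter: "(h ^^ k) x0 \<in> {0..\<sigma>} \<and> \<bar>(h ^^ k) x0 - xf\<bar> \<le> \<gamma> ^ k * \<bar>x0 - xf\<bar>"
      if "xf \<in> {0..\<sigma>}" "h xf = xf" "x0 \<in> {0..\<sigma>}" for xf x0 k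
    proof (induction k)
      case 0 then show ?case using that by simp
    next
      case (Suc k)
      have "\<bar>(h ^^ Suc k) x0 - xf\<bar> = \<bar>h ((h ^^ k) x0) - h xf\<bar>" using that by simp
      also have "\<dots> \<le> \<gamma> * \<bar>(h ^^ k) x0 - xf\<bar>" using hcon[of "(h ^^ k) x0" xf] Suc that by auto
      also have "\<dots> \<le> \<gamma> * (\<gamma> ^ k * \<bar>x0 - xf\<bar>)" using Suc gpos by (intro mult_left_mono) auto
      finally show ?case using hin Suc by (simp add: mult.assoc)
    qed
    show "(\<exists>!xf. xf \<in> {0..\<sigma>} \<and> hmap g D0 D1 xf = xf)
          \<and> (\<forall>xf\<in>{0..\<sigma>}. hmap g D0 D1 xf = xf \<longrightarrow>
               (\<forall>x0\<in>{0..\<sigma>}. \<forall>k::nat.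
                  \<bar>(hmap g D0 D1 ^^ k) x0 - xf\<bar> \<le> \<gamma> ^ k / (1 - \<gamma>) * \<bar>x0 - xf\<bar>))"
      unfolding h_def[symmetric]
    proof (intro conjI ballI allI impI)
      show "\<exists>!xf. xf \<in> {0..\<sigma>} \<and> h xf = xf" using ex uniq by blast
    next
      fix xf x0 k assume a: "xf \<in> {0..\<sigma>}" "h xf = xf" "x0 \<in> {0..\<sigma>}"
      have "\<bar>(h ^^ k) x0 - xf\<bar> \<le> \<gamma> ^ k * \<bar>x0 - xf\<bar>" using iter[OF a] by auto
      also have "\<dots> \<le> \<gamma> ^ k / (1 - \<gamma>) * \<bar>x0 - xf\<bar>"
      proof (intro mult_right_mono)
        have "\<gamma> ^ k * 1 \<le> \<gamma> ^ k * (1 / (1 - \<gamma>))" using g1 gpos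
          by (intro mult_left_mono) (auto simp: field_simps)
        then show "\<gamma> ^ k \<le> \<gamma> ^ k / (1 - \<gamma>)" by simp
      qed auto
      finally show "\<bar>(h ^^ k) x0 - xf\<bar> \<le> \<gamma> ^ k / (1 - \<gamma>) * \<bar>x0 - xf\<bar>" .
    qed
  qed
  show "(\<exists>x1\<in>{0..\<sigma>}. g' x1 > 0 \<and> 1 / g' x1 < D1 \<and> D1 < x1 / g x1)
        \<longrightarrow> (\<exists>D0\<ge>0. \<exists>x y. x \<ge> 0 \<and> y \<ge> 0 \<and> x \<noteq> y
                \<and> hmap g D0 D1 x = x \<and> hmap g D0 D1 y = y)"
  proof
    assume "\<exists>x1\<in>{0..\<sigma>}. g' x1 > 0 \<and> 1 / g' x1 < D1 \<and> D1 < x1 / g x1"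
    then obtain x1 where x1: "x1 \<in> {0..\<sigma>}" "g' x1 > 0" "1 / g' x1 < D1" "D1 < x1 / g x1" by auto
    have x1pos: "x1 > 0" using x1 g0 D1_pos by (cases "x1 = 0") auto
    have gx1: "g x1 > 0"
    proof -
      have "g 0 < g x1" using g_mono x1(1) x1pos sigma_pos unfolding strict_mono_on_def by auto
      then show ?thesis using g0 by simp
    qed
    define phi where "phi u = u - D1 * g u" for u
    have phix1: "phi x1 > 0" using x1(4) gx1 unfolding phi_def by (simp add: field_simps)
    have dneg: "1 - D1 * g' x1 < 0" using x1(2,3) by (simp add: field_simps)
    have "(phi has_real_derivative (1 - D1 * g' x1)) (at x1 within {0..\<sigma>})"
      unfolding phi_def[abs_def] using g_deriv x1(1) by (auto intro!: derivative_eq_intros)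
    from has_real_derivative_neg_dec_left[OF this dneg] obtain d where
      d: "d > 0" "\<And>e. e > 0 \<Longrightarrow> x1 - e \<in> {0..\<sigma>} \<Longrightarrow> e < d \<Longrightarrow> phi x1 < phi (x1 - e)" by blast
    define t where "t = x1 - min (d/2) (x1/2)"
    have t: "0 < t" "t < x1" "phi x1 < phi t" unfolding t_def using d x1 x1pos
      by (auto intro!: d(2))
    have pcont: "continuous_on {0..t} phi" unfolding phi_def[abs_def]
      using t x1 by (intro continuous_intros continuous_on_subset[OF gcont]) auto
    have "phi 0 \<le> phi x1" "phi x1 \<le> phi t" using phix1 t g0 unfolding phi_def by auto
    from IVT'[of phi 0 "phi x1" t, OF this] pcont t obtain v where
      v: "0 \<le> v" "v \<le> t" "phi v = phi x1" by auto
    have gv: "g v < g x1" using g_mono v t x1 unfolding strict_mono_on_def by auto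
    show "\<exists>D0\<ge>0. \<exists>x y. x \<ge> 0 \<and> y \<ge> 0 \<and> x \<noteq> y
                \<and> hmap g D0 D1 x = x \<and> hmap g D0 D1 y = y"
    proof (intro exI conjI)
      show "phi x1 \<ge> 0" using phix1 by simp
      show "g v \<ge> 0" using g_nonneg v by auto
      show "g x1 \<ge> 0" using gx1 by simp
      show "g v \<noteq> g x1" using gv by simp
      show "hmap g (phi x1) D1 (g v) = g v" using v(3) unfolding hmap_def phi_def
        by (metis add_diff_cancel diff_add_cancel)
      show "hmap g (phi x1) D1 (g x1) = g x1" unfolding hmap_def phi_def by simp
    qed
  qed
qed

end
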